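(* Let $\vec{\alpha}=\langle\alpha_s:s\in[\mathbb{N}]^{<\infty}\rangle$ be a sequence of nonstandard hypernatural numbers and let $n\in\mathbb{N}$. For every $A\subseteq[\mathbb{N}]^n$ and every $\vec{\alpha}$-tree $T$ there exists an $\vec{\alpha}$-tree $S\subseteq T$ with $st(S)=st(T)$ such that either $S(n)\subseteq A$ or $S(n)\cap A=\emptyset$.
   Context: Setting (Alpha-Theory of Benci–Di Nasso): ZFC together with a new symbol $\alpha$ satisfying: ($\alpha$1) every sequence $\varphi=\langle\varphi_i:i\in\mathbb{N}\rangle$ has a unique ideal value $\varphi[\alpha]$; ($\alpha$2) if $\varphi[\alpha]=\psi[\alpha]$ and $f\circ\varphi$, $f\circ\psi$ make sense then $(f\circ\varphi)[\alpha]=(f\circ\psi)[\alpha]$; ($\alpha$3) constant real sequences $r$ have ideal value $r$, and $\langle i\rangle$ has ideal value $\alpha\notin\mathbb{N}$; ($\alpha$4) if $\vartheta_i=\{\varphi_i,\psi_i\}$ then $\vartheta[\alpha]=\{\varphi[\alpha],\psi[\alpha]\}$; ($\alpha$5) the constant sequence $\emptyset$ has ideal value $\emptyset$, and for nonempty $\psi_i$, $\psi[\alpha]=\{\vartheta[\alpha]:\vartheta_i\in\psi_i\ \forall i\}$. ${}^*A$ is the ideal value of the constant sequence $A$; elements of ${}^*\mathbb{N}\setminus\mathbb{N}$ are nonstandard hypernatural numbers. $[X]^n$, $[X]^{<\infty}$, $[X]^\infty$: $n$-element, finite, infinite subsets of $X\subseteq\mathbb{N}$. For finite $s$, $s\sqsubseteq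 X$ means $s=\{j\in X:j\le i\}$ for some $i$. A tree on $\mathbb{N}$ is a nonempty $T\subseteq[\mathbb{N}]^{<\infty}$ closed under $\sqsubseteq$-initial segments; $T(n)=\{s\in T:|s|=n\}$; stem $st(T)$ = $\sqsubseteq$-maximal $s\in T$ comparable with all elements of $T$; $T/s=\{t\in T:s\sqsubseteq t\}$. An $\vec{\alpha}$-tree is a tree $T$ with a stem, $T/st(T)\neq\emptyset$, and $s\cup\{\alpha_s\}\in{}^*T$ for all $s\in T/st(T)$. *)

theory Defs
  imports Main
begin

text \<open>Model of Alpha-Theory: the ideal value of a sequence is its class in the
ultrapower modulo the nonprincipal ultrafilter U = {X. alpha in *X} on nat.
A hypernatural is represented by a sequence nat => nat; it is nonstandard iff
it differs U-almost everywhere from every standard k.\<close>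

definition nonprincipal_ultrafilter :: "nat set set \<Rightarrow> bool" where
  "nonprincipal_ultrafilter U \<longleftrightarrow>
     UNIV \<in> U \<and> {} \<notin> U \<and>
     (\<forall>X Y. X \<in> U \<longrightarrow> X \<subseteq> Y \<longrightarrow> Y \<in> U) \<and>
     (\<forall>X Y. X \<in> U \<longrightarrow> Y \<in> U \<longrightarrow> X \<inter> Y \<in> U) \<and>
     (\<forall>X. X \<in> U \<or> - X \<in> U) \<and>
     (\<forall>X. finite X \<longrightarrow> X \<notin> U)"

definition nonstandard_hypernat :: "nat set set \<Rightarrow> (nat \<Rightarrow> nat) \<Rightarrow> bool" where
  "nonstandard_hypernat U \<phi> \<longleftrightarrow> (\<forall>k::nat. {i. \<phi> i \<noteq> k} \<in> U)"

definition init_seg :: "nat set \<Rightarrow> nat set \<Rightarrow> bool" where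
  "init_seg s X \<longleftrightarrow> finite s \<and> (\<exists>i. s = {j \<in> X. j < i})"

definition is_tree :: "nat set set \<Rightarrow> bool" where
  "is_tree T \<longleftrightarrow> T \<noteq> {} \<and> (\<forall>t\<in>T. finite t) \<and>
     (\<forall>t\<in>T. \<forall>s. init_seg s t \<longrightarrow> s \<in> T)"

definition level :: "nat set set \<Rightarrow> nat \<Rightarrow> nat set set" where
  "level T n = {s \<in> T. card s = n}"

definition comparable_all :: "nat set set \<Rightarrow> nat set \<Rightarrow> bool" where
  "comparable_all T s \<longleftrightarrow> (\<forall>t\<in>T. init_seg s t \<or> init_seg t s)"

definition is_stem :: "nat set set \<Rightarrow> nat set \<Rightarrow> bool" where
  "is_stem T s \<longleftrightarrow> s \<in> T \<and> comparable_all T s \<and>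
     (\<forall>s'\<in>T. comparable_all T s' \<longrightarrow> init_seg s s' \<longrightarrow> s' = s)"

definition has_stem :: "nat set set \<Rightarrow> bool" where
  "has_stem T \<longleftrightarrow> (\<exists>s. is_stem T s)"

definition stem :: "nat set set \<Rightarrow> nat set" where
  "stem T = (THE s. is_stem T s)"

definition tree_above :: "nat set set \<Rightarrow> nat set \<Rightarrow> nat set set" where
  "tree_above T s = {t \<in> T. init_seg s t}"

text \<open>alpha-tree: s \<union> {alpha_s} \<in> *T, i.e. {i. s \<union> {alph s i} \<in> T} \<in> U.\<close>
definition alpha_tree ::
  "nat set set \<Rightarrow> (nat set \<Rightarrow> nat \<Rightarrow> nat) \<Rightarrow> nat set set \<Rightarrow> bool" where
  "alpha_tree U alph T \<longleftrightarrow> is_tree T \<and> has_stem T \<and>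
     tree_above T (stem T) \<noteq> {} \<and>
     (\<forall>s\<in>tree_above T (stem T). {i. s \<union> {alph s i} \<in> T} \<in> U)"

end

theory Submission
  imports Defs
begin

lemma is_fin: "init_seg s X \<Longrightarrow> finite s"
  by (simp add: init_seg_def)

lemma is_sub: "init_seg s X \<Longrightarrow> s \<subseteq> X"
  by (auto simp: init_seg_def)

lemma is_refl: assumes "finite s" shows "init_seg s s"
proof -
  obtain m where m: "\<forall>j\<in>s. j \<le> m" using assms finite_nat_set_iff_bounded_le by blast
  have "s = {j\<in>s. j < Suc m}" using m by auto
  thus ?thesis using assms unfolding init_seg_def by blast
qed

lemma is_trans: assumes "init_seg a b" "init_seg b c" shows "init_seg a c"
proof -
  obtain i where i: "a = {j\<in>b. j<i}" using assms(1) by (auto simp: init_seg_def)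
  obtain i' where i': "b = {j\<in>c. j<i'}" using assms(2) by (auto simp: init_seg_def)
  have "a = {j\<in>c. j < min i i'}" using i i' by auto
  thus ?thesis using assms(1) unfolding init_seg_def by blast
qed

lemma is_comp: assumes "init_seg a c" "init_seg b c" shows "init_seg a b \<or> init_seg b a"
proof -
  obtain i where i: "a = {j\<in>c. j<i}" using assms(1) by (auto simp: init_seg_def)
  obtain i' where i': "b = {j\<in>c. j<i'}" using assms(2) by (auto simp: init_seg_def)
  show ?thesis
  proof (cases "i \<le> i'")
    case True
    hence "a = {j\<in>b. j<i}" using i i' by auto
    thus ?thesis using assms(1) unfolding init_seg_def by blast
  next
    case False
    hence "b = {j\<in>a. j<i'}" using i i' by auto
    thus ?thesis using assms(2) unfolding init_seg_def by blast
  qed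
qed

lemma is_antisym: "init_seg a b \<Longrightarrow> init_seg b a \<Longrightarrow> a = b"
  using is_sub[of a b] is_sub[of b a] by (rule subset_antisym)

lemma is_card: "init_seg a b \<Longrightarrow> finite b \<Longrightarrow> card a \<le> card b"
  using is_sub[of a b] card_mono[of b a] by simp

lemma is_card_eq: "init_seg a b \<Longrightarrow> finite b \<Longrightarrow> card a = card b \<Longrightarrow> a = b"
  using is_sub[of a b] card_subset_eq[of b a] by simp

lemma is_child:
  assumes "finite t" "\<forall>j\<in>t. j<x"
  shows "init_seg u (insert x t) \<longleftrightarrow> init_seg u t \<or> u = insert x t"
proof
  assume "init_seg u (insert x t)"
  then obtain i where i: "u = {j\<in>insert x t. j<i}" and f: "finite u" by (auto simp: init_seg_def)
  show "init_seg u t \<or> u = insert x t"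
  proof (cases "i \<le> x")
    case True
    hence "u = {j\<in>t. j<i}" using i by auto
    thus ?thesis using f unfolding init_seg_def by blast
  next
    case False
    hence "u = insert x t" using i assms(2) by auto
    thus ?thesis by blast
  qed
next
  assume "init_seg u t \<or> u = insert x t"
  thus "init_seg u (insert x t)"
  proof
    assume "init_seg u t"
    then obtain i where i: "u = {j\<in>t. j<i}" and f: "finite u" by (auto simp: init_seg_def)
    have "u = {j\<in>insert x t. j < min i x}" using i assms(2) by auto
    thus ?thesis using f unfolding init_seg_def by blast
  next
    assume "u = insert x t" thus ?thesis using is_refl assms(1) by simp
  qed
qed

lemma child_card: "finite (t::nat set) \<Longrightarrow> \<forall>j\<in>t. j<x \<Longrightarrow> card (insert x t) = Suc (card t)"
proof -
  assume a: "finite t" "\<forall>j\<in>t. j<x"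
  have "x \<notin> t" using a(2) by auto
  thus ?thesis using card_insert_disjoint[OF a(1)] by simp
qed

lemma uf_props:
  assumes "nonprincipal_ultrafilter U"
  shows "UNIV \<in> U" "{} \<notin> U" "X \<in> U \<Longrightarrow> X \<subseteq> Y \<Longrightarrow> Y \<in> U"
    "X \<in> U \<Longrightarrow> Y \<in> U \<Longrightarrow> X \<inter> Y \<in> U" "X \<in> U \<or> - X \<in> U"
proof -
  note h = assms[unfolded nonprincipal_ultrafilter_def]
  show "UNIV \<in> U" using h by (elim conjE)
  show "{} \<notin> U" using h by (elim conjE)
  show "X \<in> U \<Longrightarrow> X \<subseteq> Y \<Longrightarrow> Y \<in> U" using h by (elim conjE) (erule allE[of _ X], erule allE[of _ Y], simp)
  show "X \<in> U \<Longrightarrow> Y \<in> U \<Longrightarrow> X \<inter> Y \<in> U" using h by (elim conjE) (erule allE[of _ X], erule allE[of _ Y], simp)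
  show "X \<in> U \<or> - X \<in> U" using h by (elim conjE) (erule allE[of _ X], simp)
qed

lemma uf_finter:
  assumes "nonprincipal_ultrafilter U" "finite K" "\<forall>k\<in>K. X k \<in> U"
  shows "(\<Inter>k\<in>K. X k) \<in> U"
  using assms(2,3)
proof (induction K rule: finite_induct)
  case empty thus ?case using uf_props(1)[OF assms(1)] by simp
next
  case (insert k K) thus ?case using uf_props(4)[OF assms(1)] by simp
qed

lemma big_in_U:
  assumes "nonprincipal_ultrafilter U" "nonstandard_hypernat U f" "finite s"
  shows "{i. \<forall>j\<in>s. j < f i} \<in> U"
proof -
  obtain m where m: "\<forall>j\<in>s. j \<le> m" using assms(3) finite_nat_set_iff_bounded_le by blast
  have "(\<Inter>k\<in>{..m}. {i. f i \<noteq> k}) \<in> U"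
    using uf_finter[OF assms(1), of "{..m}" "\<lambda>k. {i. f i \<noteq> k}"] assms(2)
    unfolding nonstandard_hypernat_def by simp
  moreover have "(\<Inter>k\<in>{..m}. {i. f i \<noteq> k}) \<subseteq> {i. \<forall>j\<in>s. j < f i}"
  proof
    fix i assume "i \<in> (\<Inter>k\<in>{..m}. {i. f i \<noteq> k})"
    hence h: "\<And>k. k \<le> m \<Longrightarrow> f i \<noteq> k" by blast
    have "m < f i"
    proof (rule ccontr)
      assume "\<not> m < f i"
      hence "f i \<le> m" by simp
      thus False using h by blast
    qed
    thus "i \<in> {i. \<forall>j\<in>s. j < f i}" using m by auto
  qed
  ultimately show ?thesis by (rule uf_props(3)[OF assms(1)])
qed

lemma stem_unique: assumes "is_stem T s1" "is_stem T s2" shows "s1 = s2"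
proof -
  have "init_seg s1 s2 \<or> init_seg s2 s1" using assms unfolding is_stem_def comparable_all_def by blast
  thus ?thesis
  proof
    assume "init_seg s1 s2" thus ?thesis using assms unfolding is_stem_def by blast
  next
    assume h: "init_seg s2 s1"
    have "s1 \<in> T" "comparable_all T s1" using assms(1) unfolding is_stem_def by auto
    hence "s1 = s2" using assms(2) h unfolding is_stem_def by blast
    thus ?thesis .
  qed
qed

lemma stem_eq: "is_stem T s \<Longrightarrow> stem T = s"
  unfolding stem_def
proof (rule the_equality)
  assume "is_stem T s" thus "is_stem T s" .
  fix s' assume "is_stem T s" "is_stem T s'" thus "s' = s" using stem_unique[of T s s'] by simp
qed

lemma branch_key:
  assumes "init_seg st s'" "s' \<noteq> st" "finite st" "\<forall>j\<in>st. j<x"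
    "init_seg s' (insert x st) \<or> init_seg (insert x st) s'"
  shows "x \<in> s' \<and> (\<forall>y\<in>s' - st. x \<le> y)"
  using assms(5)
proof
  assume "init_seg s' (insert x st)"
  hence "init_seg s' st \<or> s' = insert x st" using is_child[OF assms(3,4)] by blast
  thus ?thesis
  proof
    assume "init_seg s' st" hence "s' = st" using is_antisym assms(1) by blast
    thus ?thesis using assms(2) by simp
  next
    assume "s' = insert x st" thus ?thesis by auto
  qed
next
  assume h: "init_seg (insert x st) s'"
  then obtain i where i: "insert x st = {j\<in>s'. j<i}" by (auto simp: init_seg_def)
  have xi: "x \<in> s'" "x < i" using i by auto
  have "\<forall>y\<in>s' - st. x \<le> y"
  proof
    fix y assume y: "y \<in> s' - st"
    show "x \<le> y"
    proof (rule ccontr)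
      assume "\<not> x \<le> y"
      hence "y \<in> {j\<in>s'. j<i}" using y xi by auto
      hence "y \<in> insert x st" using i by simp
      thus False using y \<open>\<not> x \<le> y\<close> by auto
    qed
  qed
  thus ?thesis using xi by blast
qed

primrec col :: "nat set set \<Rightarrow> (nat set \<Rightarrow> nat \<Rightarrow> nat) \<Rightarrow> nat set set \<Rightarrow> nat set set \<Rightarrow> nat \<Rightarrow> nat set \<Rightarrow> bool" where
  "col U alph A T 0 t = (t \<in> A)"
| "col U alph A T (Suc k) t = ({i. insert (alph t i) t \<in> T \<and> col U alph A T k (insert (alph t i) t)} \<in> U)"


theorem mainTheorem14:
  fixes U :: "nat set set" and alph :: "nat set \<Rightarrow> nat \<Rightarrow> nat"
    and n :: nat and A T :: "nat set set"
  assumes "nonprincipal_ultrafilter U"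
    and "\<forall>s. finite s \<longrightarrow> nonstandard_hypernat U (alph s)"
    and "A \<subseteq> {s. finite s \<and> card s = n}"
    and "alpha_tree U alph T"
  shows "\<exists>S. alpha_tree U alph S \<and> S \<subseteq> T \<and> stem S = stem T \<and>
           (level S n \<subseteq> A \<or> level S n \<inter> A = {})"
proof -
  note uf = uf_props[OF assms(1)]
  have Ttree: "is_tree T" and hs: "has_stem T"
    and acT: "\<forall>s\<in>tree_above T (stem T). {i. s \<union> {alph s i} \<in> T} \<in> U"
    using assms(4) unfolding alpha_tree_def by auto
  obtain st where ist: "is_stem T st" using hs unfolding has_stem_def by blast
  have stT: "stem T = st" using stem_eq[OF ist] .
  have stinT: "st \<in> T" and compT: "\<forall>t\<in>T. init_seg st t \<or> init_seg t st"
    using ist unfolding is_stem_def comparable_all_def by auto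
  have finT: "\<forall>t\<in>T. finite t" and closT: "\<forall>t\<in>T. \<forall>s. init_seg s t \<longrightarrow> s \<in> T"
    using Ttree unfolding is_tree_def by auto
  have fst: "finite st" using finT stinT by blast
  have acT': "\<And>s. s \<in> T \<Longrightarrow> init_seg st s \<Longrightarrow> {i. insert (alph s i) s \<in> T} \<in> U"
    using acT unfolding stT tree_above_def by simp
  have bigU: "\<And>s. finite s \<Longrightarrow> {i. \<forall>j\<in>s. j < alph s i} \<in> U"
    using big_in_U[OF assms(1)] assms(2) by blast
  define b where "b = col U alph A T (n - card st) st"
  define S where "S = {t\<in>T. init_seg t st \<or> (init_seg st t \<and>
      (\<forall>u. init_seg st u \<and> init_seg u t \<and> card u \<le> n \<longrightarrow> col U alph A T (n - card u) u = b))}"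
  have SsubT: "S \<subseteq> T" unfolding S_def by blast
  have stS: "st \<in> S" unfolding S_def using stinT is_refl[OF fst] by blast
  have compS: "\<forall>t\<in>S. init_seg st t \<or> init_seg t st" using compT SsubT by blast
  have cons: "\<And>t u. t \<in> S \<Longrightarrow> init_seg st t \<Longrightarrow> init_seg st u \<Longrightarrow> init_seg u t \<Longrightarrow> card u \<le> n
      \<Longrightarrow> col U alph A T (n - card u) u = b"
  proof -
    fix t u assume t: "t \<in> S" "init_seg st t" "init_seg st u" "init_seg u t" "card u \<le> n"
    show "col U alph A T (n - card u) u = b"
    proof (cases "init_seg t st")
      case True
      hence "t = st" using is_antisym t(2) by blast
      hence "u = st" using is_antisym t(3,4) by blast
      thus ?thesis unfolding b_def by simp
    next
      case False
      thus ?thesis using t unfolding S_def by blast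
    qed
  qed
  have treeS: "is_tree S"
    unfolding is_tree_def
  proof (intro conjI ballI allI impI)
    show "S \<noteq> {}" using stS by blast
  next
    fix t assume "t \<in> S" thus "finite t" using finT SsubT by blast
  next
    fix t s assume t: "t \<in> S" and s: "init_seg s t"
    have sT: "s \<in> T" using closT t s SsubT by blast
    show "s \<in> S"
    proof (cases "init_seg t st")
      case True thus ?thesis using is_trans[OF s True] sT unfolding S_def by blast
    next
      case False
      hence tst: "init_seg st t" using compS t by blast
      have "init_seg s st \<or> init_seg st s" using is_comp[OF s tst] .
      thus ?thesis
      proof
        assume "init_seg s st" thus ?thesis using sT unfolding S_def by blast
      next
        assume sts: "init_seg st s"
        have "\<forall>u. init_seg st u \<and> init_seg u s \<and> card u \<le> n \<longrightarrow> col U alph A T (n - card u) u = b"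
          using cons[OF t tst] is_trans[OF _ s] by blast
        thus ?thesis using sT sts unfolding S_def by blast
      qed
    qed
  qed
  have child: "\<And>s x. s \<in> S \<Longrightarrow> init_seg st s \<Longrightarrow> \<forall>j\<in>s. j < x \<Longrightarrow> insert x s \<in> T \<Longrightarrow>
      (card s < n \<longrightarrow> col U alph A T (n - Suc (card s)) (insert x s) = b) \<Longrightarrow> insert x s \<in> S"
  proof -
    fix s x assume s: "s \<in> S" "init_seg st s" "\<forall>j\<in>s. j < x" "insert x s \<in> T"
      and c: "card s < n \<longrightarrow> col U alph A T (n - Suc (card s)) (insert x s) = b"
    have fs: "finite s" using s(1) SsubT finT by blast
    have sc: "init_seg s (insert x s)" using is_child[OF fs s(3)] is_refl[OF fs] by blast
    have stc: "init_seg st (insert x s)" using is_trans[OF s(2) sc] .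
    have "\<forall>u. init_seg st u \<and> init_seg u (insert x s) \<and> card u \<le> n \<longrightarrow> col U alph A T (n - card u) u = b"
    proof (intro allI impI)
      fix u assume u: "init_seg st u \<and> init_seg u (insert x s) \<and> card u \<le> n"
      hence "init_seg u s \<or> u = insert x s" using is_child[OF fs s(3)] by blast
      thus "col U alph A T (n - card u) u = b"
      proof
        assume "init_seg u s" thus ?thesis using cons[OF s(1,2)] u by blast
      next
        assume ux: "u = insert x s"
        hence "card u = Suc (card s)" using child_card[OF fs s(3)] by simp
        thus ?thesis using c u ux by simp
      qed
    qed
    thus "insert x s \<in> S" using s(4) stc unfolding S_def by blast
  qed
  have alphaS: "\<And>s. s \<in> S \<Longrightarrow> init_seg st s \<Longrightarrow> {i. insert (alph s i) s \<in> S} \<in> U"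
  proof -
    fix s assume s: "s \<in> S" "init_seg st s"
    have fs: "finite s" using s(1) SsubT finT by blast
    define G where "G = {i. \<forall>j\<in>s. j < alph s i}"
    have GU: "G \<in> U" unfolding G_def using bigU[OF fs] .
    have FU: "{i. insert (alph s i) s \<in> T} \<in> U" using acT' s SsubT by blast
    show "{i. insert (alph s i) s \<in> S} \<in> U"
    proof (cases "card s < n")
      case False
      have "G \<inter> {i. insert (alph s i) s \<in> T} \<subseteq> {i. insert (alph s i) s \<in> S}"
        using child[OF s] False unfolding G_def by blast
      thus ?thesis using uf(3,4) GU FU by blast
    next
      case True
      define k where "k = n - Suc (card s)"
      have nk: "n - card s = Suc k" using True unfolding k_def by simp
      have cs: "col U alph A T (Suc k) s = b" using cons[OF s s(2) is_refl[OF fs]] True nk by simp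
      define H where "H = {i. insert (alph s i) s \<in> T \<and> col U alph A T k (insert (alph s i) s) = b}"
      have HU: "H \<in> U"
      proof (cases b)
        case True
        hence "{i. insert (alph s i) s \<in> T \<and> col U alph A T k (insert (alph s i) s)} \<in> U" using cs by simp
        moreover have "{i. insert (alph s i) s \<in> T \<and> col U alph A T k (insert (alph s i) s)} \<subseteq> H"
          unfolding H_def using True by blast
        ultimately show ?thesis using uf(3) by blast
      next
        case False
        hence "{i. insert (alph s i) s \<in> T \<and> col U alph A T k (insert (alph s i) s)} \<notin> U" using cs by simp
        hence "- {i. insert (alph s i) s \<in> T \<and> col U alph A T k (insert (alph s i) s)} \<in> U" using uf(5) by blast
        hence "- {i. insert (alph s i) s \<in> T \<and> col U alph A T k (insert (alph s i) s)} \<inter> {i. insert (alph s i) s \<in> T} \<in> U"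
          using uf(4) FU by blast
        moreover have "- {i. insert (alph s i) s \<in> T \<and> col U alph A T k (insert (alph s i) s)} \<inter> {i. insert (alph s i) s \<in> T} \<subseteq> H"
          unfolding H_def using False by blast
        ultimately show ?thesis using uf(3) by blast
      qed
      have "G \<inter> H \<subseteq> {i. insert (alph s i) s \<in> S}"
        using child[OF s] unfolding G_def H_def k_def by blast
      thus ?thesis using uf(3,4) GU HU by blast
    qed
  qed
  have istS: "is_stem S st"
    unfolding is_stem_def
  proof (intro conjI ballI impI)
    show "st \<in> S" by (rule stS)
    show "comparable_all S st" unfolding comparable_all_def using compS by blast
  next
    fix s' assume s': "s' \<in> S" "comparable_all S s'" "init_seg st s'"
    show "s' = st"
    proof (rule ccontr)
      assume ne: "s' \<noteq> st"
      define X where "X = {i. insert (alph st i) st \<in> S} \<inter> {i. \<forall>j\<in>st. j < alph st i}"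
      have XU: "X \<in> U" unfolding X_def using alphaS[OF stS is_refl[OF fst]] bigU[OF fst] uf(4) by blast
      have "X \<noteq> {}" using XU uf(2) by auto
      then obtain i1 where i1: "i1 \<in> X" by blast
      have "{i. alph st i \<noteq> alph st i1} \<in> U" using assms(2) fst unfolding nonstandard_hypernat_def by blast
      hence "{i. alph st i \<noteq> alph st i1} \<inter> X \<in> U" using XU uf(4) by blast
      hence "{i. alph st i \<noteq> alph st i1} \<inter> X \<noteq> {}" using uf(2) by auto
      then obtain i2 where i2: "i2 \<in> X" "alph st i2 \<noteq> alph st i1" by blast
      have key: "\<And>i. i \<in> X \<Longrightarrow> alph st i \<in> s' \<and> (\<forall>y\<in>s' - st. alph st i \<le> y)"
      proof -
        fix i assume i: "i \<in> X"
        have "init_seg s' (insert (alph st i) st) \<or> init_seg (insert (alph st i) st) s'"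
          using s'(2) i unfolding comparable_all_def X_def by blast
        thus "alph st i \<in> s' \<and> (\<forall>y\<in>s' - st. alph st i \<le> y)"
          using branch_key[OF s'(3) ne fst] i unfolding X_def by blast
      qed
      have nst: "\<And>i. i \<in> X \<Longrightarrow> alph st i \<notin> st" unfolding X_def by blast
      have "alph st i1 \<le> alph st i2" using key[OF i1] key[OF i2(1)] nst[OF i2(1)] by blast
      moreover have "alph st i2 \<le> alph st i1" using key[OF i1] key[OF i2(1)] nst[OF i1] by blast
      ultimately show False using i2(2) by simp
    qed
  qed
  have stS_eq: "stem S = st" using stem_eq[OF istS] .
  have aS: "alpha_tree U alph S"
    unfolding alpha_tree_def
  proof (intro conjI ballI)
    show "is_tree S" by (rule treeS)
    show "has_stem S" using istS unfolding has_stem_def by blast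
    show "tree_above S (stem S) \<noteq> {}" unfolding stS_eq tree_above_def using stS is_refl[OF fst] by blast
  next
    fix s assume "s \<in> tree_above S (stem S)"
    hence "s \<in> S" "init_seg st s" unfolding stS_eq tree_above_def by auto
    thus "{i. s \<union> {alph s i} \<in> S} \<in> U" using alphaS by simp
  qed
  have lev: "level S n \<subseteq> A \<or> level S n \<inter> A = {}"
  proof (cases "n \<le> card st")
    case True
    have l1: "\<And>t. t \<in> level S n \<Longrightarrow> init_seg t st"
    proof -
      fix t assume t: "t \<in> level S n"
      hence tS: "t \<in> S" and ct: "card t = n" unfolding level_def by auto
      have ft: "finite t" using tS SsubT finT by blast
      show "init_seg t st"
      proof (cases "init_seg st t")
        case True
        have "card st \<le> card t" using is_card[OF True ft] .
        hence "st = t" using is_card_eq[OF True ft] ct \<open>n \<le> card st\<close> by simp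
        thus ?thesis using is_refl[OF fst] by simp
      next
        case False thus ?thesis using compS tS by blast
      qed
    qed
    have l2: "\<And>t t'. t \<in> level S n \<Longrightarrow> t' \<in> level S n \<Longrightarrow> t = t'"
    proof -
      fix t t' assume t: "t \<in> level S n" "t' \<in> level S n"
      have ft: "finite t" "finite t'" using t SsubT finT unfolding level_def by auto
      have cc: "card t = card t'" using t unfolding level_def by auto
      have "init_seg t t' \<or> init_seg t' t" using is_comp[OF l1[OF t(1)] l1[OF t(2)]] .
      thus "t = t'"
      proof
        assume "init_seg t t'" thus ?thesis using is_card_eq ft cc by blast
      next
        assume "init_seg t' t" thus ?thesis using is_card_eq ft cc by force
      qed
    qed
    show ?thesis
    proof (cases "level S n \<inter> A = {}")
      case False
      then obtain t0 where "t0 \<in> level S n" "t0 \<in> A" by blast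
      hence "level S n \<subseteq> A" using l2 by blast
      thus ?thesis by blast
    qed simp
  next
    case False
    have l1: "\<And>t. t \<in> level S n \<Longrightarrow> (t \<in> A) = b"
    proof -
      fix t assume t: "t \<in> level S n"
      hence tS: "t \<in> S" and ct: "card t = n" unfolding level_def by auto
      have ft: "finite t" using tS SsubT finT by blast
      have "\<not> init_seg t st" using is_card[OF _ fst, of t] ct False by auto
      hence tst: "init_seg st t" using compS tS by blast
      have "col U alph A T (n - card t) t = b" using cons[OF tS tst tst is_refl[OF ft]] ct by simp
      thus "(t \<in> A) = b" using ct by simp
    qed
    show ?thesis
    proof (cases b)
      case True thus ?thesis using l1 by blast
    next
      case False thus ?thesis using l1 by blast
    qed
  qed
  show ?thesis using aS SsubT stS_eq stT lev by blast
qed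

end
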